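(* Let $(S,\mu)$ be a complete positive measure space, let $X$ be a real Banach space whose norm is Fréchet differentiable, and let $f\in L^1(\mu,X)$ be non-zero. If $f$ is a right symmetric point of $L^1(\mu,X)$, then $Z(f)^c=\{s\in S:f(s)\neq0\}$ is an atom. Conversely, if $Z(f)^c$ is an atom and $f(s)$ is a right symmetric point of $X$ for each $s\in S$, then $f$ is a right symmetric point of $L^1(\mu,X)$.
   Context: $L^1(\mu,X)$ is the Lebesgue–Bochner space of (classes of a.e. equal) strongly measurable $f:S\to X$ with $\|f\|=\int_S\|f(s)\|\,d\mu(s)<\infty$; $Z(f)=\{s:f(s)=0\}$. In a real normed space $Y$, $x\perp_{BJ}y$ means $\|x+\lambda y\|\ge\|x\|$ for all $\lambda\in\mathbb{R}$; $x$ is a right symmetric point if $y\perp_{BJ}x$ implies $x\perp_{BJ}y$ for all $y\in Y$. The norm of $X$ is Fréchet differentiable if for every non-zero $x$ there is $\varphi\in X^*$ with $\lim_{h\to0}\big|\|x+h\|-\|x\|-\varphi(h)\big|/\|h\|=0$. A measurable set $A$ is an atom if $\mu(A)>0$ and every measurable $B\subseteq A$ has $\mu(B)=0$ or $\mu(B)=\mu(A)$. *)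

theory Defs
  imports "HOL-Analysis.Analysis"
begin

definition bj_orth :: "'a::real_normed_vector \<Rightarrow> 'a \<Rightarrow> bool" where
  "bj_orth x y \<longleftrightarrow> (\<forall>c::real. norm (x + c *\<^sub>R y) \<ge> norm x)"

definition right_symmetric :: "'a::real_normed_vector \<Rightarrow> bool" where
  "right_symmetric x \<longleftrightarrow> (\<forall>y. bj_orth y x \<longrightarrow> bj_orth x y)"

text \<open>(mu-)strong measurability: a.e. limit of a sequence of measurable simple functions.
  (Isabelle's integrable needs a second countable target, so we do not use it.)\<close>
definition strongly_measurable :: "'s measure \<Rightarrow> ('s \<Rightarrow> 'b::real_normed_vector) \<Rightarrow> bool" where
  "strongly_measurable M f \<longleftrightarrow>
     (\<exists>u. (\<forall>i. simple_function M (u i)) \<and> (AE s in M. (\<lambda>i. u i s) \<longlonglongrightarrow> f s))"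

definition L1_norm :: "'s measure \<Rightarrow> ('s \<Rightarrow> 'b::real_normed_vector) \<Rightarrow> ennreal" where
  "L1_norm M f = (\<integral>\<^sup>+ s. ennreal (norm (f s)) \<partial>M)"

definition in_L1 :: "'s measure \<Rightarrow> ('s \<Rightarrow> 'b::real_normed_vector) \<Rightarrow> bool" where
  "in_L1 M f \<longleftrightarrow> strongly_measurable M f \<and> L1_norm M f < \<infinity>"

text \<open>Birkhoff--James orthogonality in L1(M,X), on representatives
  (the L1 norm does not depend on the representative).\<close>
definition bj_orth_L1 :: "'s measure \<Rightarrow> ('s \<Rightarrow> 'b::real_normed_vector) \<Rightarrow> ('s \<Rightarrow> 'b) \<Rightarrow> bool" where
  "bj_orth_L1 M f g \<longleftrightarrow> (\<forall>c::real. L1_norm M (\<lambda>s. f s + c *\<^sub>R g s) \<ge> L1_norm M f)"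

definition right_symmetric_L1 :: "'s measure \<Rightarrow> ('s \<Rightarrow> 'b::real_normed_vector) \<Rightarrow> bool" where
  "right_symmetric_L1 M f \<longleftrightarrow>
     (\<forall>g. in_L1 M g \<longrightarrow> bj_orth_L1 M g f \<longrightarrow> bj_orth_L1 M f g)"

definition is_atom :: "'s measure \<Rightarrow> 's set \<Rightarrow> bool" where
  "is_atom M A \<longleftrightarrow> A \<in> sets M \<and> emeasure M A > 0 \<and>
     (\<forall>B\<in>sets M. B \<subseteq> A \<longrightarrow> emeasure M B = 0 \<or> emeasure M B = emeasure M A)"

end

theory Submission imports Defs begin

lemma AE_measurable_complete:
  fixes h \<phi> :: "'s \<Rightarrow> real"
  assumes "complete_measure M" "\<phi> \<in> borel_measurable M" "AE s in M. h s = \<phi> s"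
  shows "h \<in> borel_measurable M"
proof (rule borel_measurableI)
  fix S :: "real set" assume "open S"
  then have A: "\<phi> -` S \<inter> space M \<in> sets M" using assms(2) by (simp add: borel_measurable_vimage_open)
  show "h -` S \<inter> space M \<in> sets M"
    by (rule complete_measure.in_sets_AE[OF assms(1) _ A]) (use assms(3) in auto)
qed

lemma norm_meas:
  fixes g :: "'s \<Rightarrow> 'b::real_normed_vector"
  assumes "complete_measure M" "strongly_measurable M g"
  shows "(\<lambda>s. norm (g s)) \<in> borel_measurable M"
proof -
  obtain u where u: "\<And>i. simple_function M (u i)" "AE s in M. (\<lambda>i. u i s) \<longlonglongrightarrow> g s"
    using assms(2) unfolding strongly_measurable_def by blast
  have m: "(\<lambda>s. norm (u i s)) \<in> borel_measurable M" for i
    by (rule borel_measurable_simple_function) (rule simple_function_compose1[OF u(1)])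
  have "(\<lambda>s. lim (\<lambda>i. norm (u i s))) \<in> borel_measurable M"
    by (rule borel_measurable_lim_metric) (rule m)
  moreover have "AE s in M. norm (g s) = lim (\<lambda>i. norm (u i s))"
    using u(2) by eventually_elim (metis limI tendsto_norm)
  ultimately show ?thesis by (rule AE_measurable_complete[OF assms(1)])
qed


lemma atom_null_contra:
  assumes "is_atom M A" "AE s in M. s \<in> A \<longrightarrow> P s"
  shows "\<exists>s\<in>A. P s"
proof (rule ccontr)
  assume "\<not> ?thesis"
  then have "AE s in M. s \<notin> A" using assms(2) by auto
  moreover have "A \<in> sets M" "emeasure M A > 0" using assms(1) unfolding is_atom_def by auto
  moreover have "{x\<in>space M. \<not> x \<notin> A} = A" using sets.sets_into_space[of A M] \<open>A \<in> sets M\<close> by auto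
  ultimately show False
    using AE_iff_measurable[of A M "\<lambda>s. s \<notin> A"] by auto
qed

lemma simple_atom_const:
  assumes "is_atom M A" "emeasure M A < \<infinity>" "simple_function M u"
  shows "\<exists>x. AE s in M. s \<in> A \<longrightarrow> u s = x"
proof -
  have A: "A \<in> sets M" "emeasure M A > 0"
    and at: "\<And>B. B \<in> sets M \<Longrightarrow> B \<subseteq> A \<Longrightarrow> emeasure M B = 0 \<or> emeasure M B = emeasure M A"
    using assms(1) unfolding is_atom_def by auto
  define P where "P x = u -` {x} \<inter> space M \<inter> A" for x
  have Pm: "P x \<in> sets M" for x
  proof (cases "x \<in> u ` space M")
    case True then show ?thesis using assms(3) A unfolding P_def simple_function_def by auto
  next
    case False then have "P x = {}" unfolding P_def by auto
    then show ?thesis by simp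
  qed
  have fin: "finite (u ` space M)" using assms(3) unfolding simple_function_def by auto
  have Aeq: "A = (\<Union>x\<in>u ` space M. P x)"
    using sets.sets_into_space[OF A(1)] unfolding P_def by auto
  have "\<exists>x\<in>u ` space M. emeasure M (P x) \<noteq> 0"
  proof (rule ccontr)
    assume "\<not> ?thesis"
    then have "(\<Union>x\<in>u ` space M. P x) \<in> null_sets M"
      using fin Pm by (intro null_sets.finite_UN) auto
    then show False using Aeq A(2) by auto
  qed
  then obtain x where x: "emeasure M (P x) \<noteq> 0" by blast
  have sub: "P x \<subseteq> A" unfolding P_def by auto
  have "emeasure M (P x) = emeasure M A" using at[OF Pm sub] x by auto
  then have "emeasure M (A - P x) = 0"
    using emeasure_Diff[OF _ A(1) Pm sub] assms(2) by auto
  then have "A - P x \<in> null_sets M" using A(1) Pm by auto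
  then have "AE s in M. s \<notin> A - P x" by (rule AE_not_in)
  then have "AE s in M. s \<in> A \<longrightarrow> u s = x"
    by eventually_elim (auto simp: P_def)
  then show ?thesis by blast
qed

lemma atom_const:
  assumes "is_atom M A" "emeasure M A < \<infinity>" "strongly_measurable M g"
  shows "\<exists>s0\<in>A. AE s in M. s \<in> A \<longrightarrow> g s = g s0"
proof -
  obtain u where u: "\<And>i. simple_function M (u i)" "AE s in M. (\<lambda>i. u i s) \<longlonglongrightarrow> g s"
    using assms(3) unfolding strongly_measurable_def by blast
  have "\<forall>i. \<exists>x. AE s in M. s \<in> A \<longrightarrow> u i s = x"
    using simple_atom_const[OF assms(1,2) u(1)] by blast
  then obtain c where c: "\<And>i. AE s in M. s \<in> A \<longrightarrow> u i s = c i" by metis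
  have "AE s in M. \<forall>i. s \<in> A \<longrightarrow> u i s = c i"
    unfolding AE_all_countable using c by blast
  with u(2) have L: "AE s in M. s \<in> A \<longrightarrow> c \<longlonglongrightarrow> g s"
  proof eventually_elim
    case (elim s)
    show ?case
    proof
      assume "s \<in> A"
      then have "(\<lambda>i. u i s) = c" using elim(2) by auto
      then show "c \<longlonglongrightarrow> g s" using elim(1) by simp
    qed
  qed
  then have "\<exists>s\<in>A. c \<longlonglongrightarrow> g s"
    using atom_null_contra[OF assms(1), of "\<lambda>s. c \<longlonglongrightarrow> g s"] by auto
  then obtain s0 where s0: "s0 \<in> A" "c \<longlonglongrightarrow> g s0" by blast
  from L have "AE s in M. s \<in> A \<longrightarrow> g s = g s0"
    by eventually_elim (use s0 LIMSEQ_unique in blast)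
  with s0 show ?thesis by blast
qed


lemma supp_finite:
  fixes f :: "'s \<Rightarrow> 'b::real_normed_vector"
  assumes cm: "complete_measure M" and fL: "in_L1 M f"
    and at: "is_atom M {s \<in> space M. f s \<noteq> 0}"
  shows "emeasure M {s \<in> space M. f s \<noteq> 0} < \<infinity>"
proof (rule ccontr)
  let ?A = "{s \<in> space M. f s \<noteq> 0}"
  assume inf: "\<not> ?thesis"
  have fm[measurable]: "(\<lambda>s. norm (f s)) \<in> borel_measurable M"
    using norm_meas[OF cm] fL unfolding in_L1_def by blast
  have fin: "L1_norm M f < \<infinity>" using fL unfolding in_L1_def by blast
  define E where "E n = {s \<in> space M. 1 / real (Suc n) < norm (f s)}" for n
  have Em: "E n \<in> sets M" for n unfolding E_def by measurable
  have "E n \<in> null_sets M" for n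
  proof -
    have "(\<integral>\<^sup>+ s. ennreal (1 / real (Suc n)) * indicator (E n) s \<partial>M) \<le> L1_norm M f"
      unfolding L1_norm_def
    proof (rule nn_integral_mono)
      fix x assume "x \<in> space M"
      show "ennreal (1 / real (Suc n)) * indicator (E n) x \<le> ennreal (norm (f x))"
        by (cases "x \<in> E n") (auto simp: E_def intro!: ennreal_leI)
    qed
    then have "ennreal (1 / real (Suc n)) * emeasure M (E n) \<le> L1_norm M f"
      by (simp only: nn_integral_cmult_indicator[OF Em])
    then have "ennreal (1 / real (Suc n)) * emeasure M (E n) < \<infinity>"
      using fin by (rule le_less_trans)
    moreover have "ennreal (1 / real (Suc n)) \<noteq> 0" by simp
    ultimately have "emeasure M (E n) \<noteq> \<infinity>"
      using ennreal_mult_eq_top_iff[of "ennreal (1 / real (Suc n))" "emeasure M (E n)"] by auto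
    note nt = this
    have sub: "E n \<subseteq> ?A" unfolding E_def by auto
    have disj: "emeasure M (E n) = 0 \<or> emeasure M (E n) = emeasure M ?A"
      using at Em sub unfolding is_atom_def by blast
    have Ainf: "emeasure M ?A = \<infinity>" using inf unfolding infinity_ennreal_def by (simp add: less_top[symmetric])
    have "emeasure M (E n) = 0"
    proof (rule ccontr)
      assume "emeasure M (E n) \<noteq> 0"
      then have "emeasure M (E n) = \<infinity>" using disj Ainf by simp
      then show False using nt by simp
    qed
    then show ?thesis using Em by (simp add: null_sets_def)
  qed
  then have "(\<Union>n. E n) \<in> null_sets M" by auto
  moreover have "(\<Union>n. E n) = ?A"
  proof safe
    fix s assume s: "s \<in> space M" "f s \<noteq> 0"
    then have "norm (f s) > 0" by auto
    then obtain n where "1 / real (Suc n) < norm (f s)"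
      using nat_approx_posE by blast
    then show "s \<in> (\<Union>n. E n)" using s unfolding E_def by auto
  qed (auto simp: E_def)
  ultimately have "emeasure M ?A = 0" by (metis null_setsD1)
  moreover have "emeasure M ?A > 0" using at unfolding is_atom_def by blast
  ultimately show False by simp
qed


lemma dir2:
  fixes f :: "'s \<Rightarrow> 'b::real_normed_vector"
  assumes cm: "complete_measure M" and fL: "in_L1 M f"
    and at: "is_atom M {s \<in> space M. f s \<noteq> 0}"
    and rs: "\<forall>s\<in>space M. right_symmetric (f s)"
  shows "right_symmetric_L1 M f"
  unfolding right_symmetric_L1_def
proof (intro allI impI)
  define A where "A = {s \<in> space M. f s \<noteq> 0}"
  have atA: "is_atom M A" using at A_def by simp
  have Am[measurable]: "A \<in> sets M" and Apos: "emeasure M A > 0"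
    using atA unfolding is_atom_def by auto
  have Afin: "emeasure M A < \<infinity>" using supp_finite[OF cm fL at] A_def by simp
  have "emeasure M A \<noteq> \<infinity>" using Afin by auto
  then obtain mr where mr0: "emeasure M A = ennreal mr" "mr \<ge> 0"
    by (cases "emeasure M A") auto
  have mr: "emeasure M A = ennreal mr" "mr > 0" using mr0 Apos by auto
  obtain s0 where s0: "s0 \<in> A" "AE s in M. s \<in> A \<longrightarrow> f s = f s0"
    using atom_const[OF atA Afin] fL unfolding in_L1_def by blast
  define x0 where "x0 = f s0"
  have s0sp: "s0 \<in> space M" using s0 A_def by auto
  fix g assume gL: "in_L1 M g" and gf: "bj_orth_L1 M g f"
  have gm[measurable]: "(\<lambda>s. norm (g s)) \<in> borel_measurable M"
    using norm_meas[OF cm] gL unfolding in_L1_def by blast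
  obtain t0 where t0: "t0 \<in> A" "AE s in M. s \<in> A \<longrightarrow> g s = g t0"
    using atom_const[OF atA Afin] gL unfolding in_L1_def by blast
  define y0 where "y0 = g t0"
  define R where "R = (\<integral>\<^sup>+ s. ennreal (norm (g s)) * indicator (space M - A) s \<partial>M)"
  have key: "L1_norm M (\<lambda>s. g s + c *\<^sub>R f s) = ennreal (norm (y0 + c *\<^sub>R x0)) * emeasure M A + R" for c
  proof -
    have "L1_norm M (\<lambda>s. g s + c *\<^sub>R f s) =
      (\<integral>\<^sup>+ s. ennreal (norm (y0 + c *\<^sub>R x0)) * indicator A s + ennreal (norm (g s)) * indicator (space M - A) s \<partial>M)"
      unfolding L1_norm_def
    proof (rule nn_integral_cong_AE)
      show "AE s in M. ennreal (norm (g s + c *\<^sub>R f s)) =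
        ennreal (norm (y0 + c *\<^sub>R x0)) * indicator A s + ennreal (norm (g s)) * indicator (space M - A) s"
        using s0(2) t0(2) AE_space
      proof eventually_elim
        case (elim s)
        show ?case
        proof (cases "s \<in> A")
          case True then show ?thesis using elim by (simp add: x0_def y0_def)
        next
          case False
          then have "f s = 0" using A_def elim by auto
          then show ?thesis using False elim by simp
        qed
      qed
    qed
    also have "\<dots> = (\<integral>\<^sup>+ s. ennreal (norm (y0 + c *\<^sub>R x0)) * indicator A s \<partial>M) + R"
      unfolding R_def by (rule nn_integral_add) measurable
    also have "\<dots> = ennreal (norm (y0 + c *\<^sub>R x0)) * emeasure M A + R"
      by (simp only: nn_integral_cmult_indicator[OF Am])
    finally show ?thesis .
  qed
  have g0: "L1_norm M g = ennreal (norm y0) * emeasure M A + R"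
    using key[of 0] by simp
  have "R \<le> L1_norm M g" unfolding g0 by (rule add_increasing) simp_all
  moreover have "L1_norm M g < \<infinity>" using gL unfolding in_L1_def by blast
  ultimately have Rfin: "R \<noteq> \<infinity>" by auto
  have "bj_orth y0 x0"
    unfolding bj_orth_def
  proof
    fix c :: real
    have "L1_norm M g \<le> L1_norm M (\<lambda>s. g s + c *\<^sub>R f s)"
      using gf unfolding bj_orth_L1_def by blast
    then have "ennreal (norm y0) * emeasure M A + R \<le> ennreal (norm (y0 + c *\<^sub>R x0)) * emeasure M A + R"
      using g0 key[of c] by simp
    then have "R + ennreal (norm y0) * emeasure M A \<le> R + ennreal (norm (y0 + c *\<^sub>R x0)) * emeasure M A"
      by (simp only: add.commute)
    then have "ennreal (norm y0) * emeasure M A \<le> ennreal (norm (y0 + c *\<^sub>R x0)) * emeasure M A"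
      using Rfin ennreal_add_left_cancel_le[of R "ennreal (norm y0) * emeasure M A" "ennreal (norm (y0 + c *\<^sub>R x0)) * emeasure M A"]
      by blast
    then have "ennreal (norm y0 * mr) \<le> ennreal (norm (y0 + c *\<^sub>R x0) * mr)"
      using mr by (simp add: ennreal_mult)
    then have "norm y0 * mr \<le> norm (y0 + c *\<^sub>R x0) * mr"
      using mr by (simp add: ennreal_le_iff)
    then show "norm y0 \<le> norm (y0 + c *\<^sub>R x0)" using mr by simp
  qed
  then have xy: "bj_orth x0 y0" using rs s0sp unfolding right_symmetric_def x0_def by blast
  have f0: "L1_norm M f = ennreal (norm x0) * emeasure M A"
  proof -
    have "L1_norm M f = (\<integral>\<^sup>+ s. ennreal (norm x0) * indicator A s \<partial>M)"
      unfolding L1_norm_def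
    proof (rule nn_integral_cong_AE)
      show "AE s in M. ennreal (norm (f s)) = ennreal (norm x0) * indicator A s"
        using s0(2) AE_space
      proof eventually_elim
        case (elim s)
        show ?case
        proof (cases "s \<in> A")
          case True then show ?thesis using elim by (simp add: x0_def)
        next
          case False
          then have "f s = 0" using A_def elim by auto
          then show ?thesis using False by simp
        qed
      qed
    qed
    also have "\<dots> = ennreal (norm x0) * emeasure M A" by (simp add: nn_integral_cmult_indicator)
    finally show ?thesis .
  qed
  show "bj_orth_L1 M f g"
    unfolding bj_orth_L1_def
  proof
    fix c :: real
    have "(\<integral>\<^sup>+ s. ennreal (norm (x0 + c *\<^sub>R y0)) * indicator A s \<partial>M) \<le> L1_norm M (\<lambda>s. f s + c *\<^sub>R g s)"
      unfolding L1_norm_def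
    proof (rule nn_integral_mono_AE)
      show "AE s in M. ennreal (norm (x0 + c *\<^sub>R y0)) * indicator A s \<le> ennreal (norm (f s + c *\<^sub>R g s))"
        using s0(2) t0(2) AE_space
      proof eventually_elim
        case (elim s)
        show ?case
          by (cases "s \<in> A") (use elim in \<open>auto simp: x0_def y0_def\<close>)
      qed
    qed
    then have "ennreal (norm (x0 + c *\<^sub>R y0)) * emeasure M A \<le> L1_norm M (\<lambda>s. f s + c *\<^sub>R g s)"
      by (simp add: nn_integral_cmult_indicator)
    moreover have "ennreal (norm x0) * emeasure M A \<le> ennreal (norm (x0 + c *\<^sub>R y0)) * emeasure M A"
      using xy unfolding bj_orth_def by (intro mult_right_mono ennreal_leI) auto
    ultimately show "L1_norm M f \<le> L1_norm M (\<lambda>s. f s + c *\<^sub>R g s)"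
      using f0 by simp
  qed
qed


lemma norm_1c: "norm (x + c *\<^sub>R x) = \<bar>1 + c\<bar> * norm x" for x :: "'b::real_normed_vector"
proof -
  have "x + c *\<^sub>R x = (1 + c) *\<^sub>R x" by (simp add: scaleR_add_left)
  then show ?thesis by simp
qed

lemma dir1_split:
  fixes f :: "'s \<Rightarrow> 'b::real_normed_vector"
  assumes cm: "complete_measure M" and fL: "in_L1 M f" and rsf: "right_symmetric_L1 M f"
    and Dm[measurable]: "D \<in> sets M" and Em[measurable]: "E \<in> sets M" and DE: "D \<inter> E = {}"
    and DEA: "D \<union> E = {s \<in> space M. f s \<noteq> 0}" and Dpos: "emeasure M D \<noteq> 0"
    and ab: "(\<integral>\<^sup>+ s. ennreal (norm (f s)) * indicator D s \<partial>M) \<le> (\<integral>\<^sup>+ s. ennreal (norm (f s)) * indicator E s \<partial>M)"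
  shows False
proof -
  have fm[measurable]: "(\<lambda>s. norm (f s)) \<in> borel_measurable M"
    using norm_meas[OF cm] fL unfolding in_L1_def by blast
  define a where "a = (\<integral>\<^sup>+ s. ennreal (norm (f s)) * indicator D s \<partial>M)"
  define b where "b = (\<integral>\<^sup>+ s. ennreal (norm (f s)) * indicator E s \<partial>M)"
  have Lf: "L1_norm M f = a + b"
  proof -
    have "L1_norm M f = (\<integral>\<^sup>+ s. ennreal (norm (f s)) * indicator D s + ennreal (norm (f s)) * indicator E s \<partial>M)"
      unfolding L1_norm_def
    proof (rule nn_integral_cong)
      fix s assume s: "s \<in> space M"
      show "ennreal (norm (f s)) = ennreal (norm (f s)) * indicator D s + ennreal (norm (f s)) * indicator E s"
      proof (cases "s \<in> D")
        case True then have "s \<notin> E" using DE by auto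
        then show ?thesis using True by simp
      next
        case False
        show ?thesis
        proof (cases "s \<in> E")
          case True then show ?thesis using False by simp
        next
          case F2: False
          then have "f s = 0" using False s DEA by auto
          then show ?thesis by simp
        qed
      qed
    qed
    also have "\<dots> = a + b" unfolding a_def b_def by (rule nn_integral_add) measurable
    finally show ?thesis .
  qed
  have fin: "L1_norm M f < \<infinity>" using fL unfolding in_L1_def by blast
  have "a \<noteq> \<infinity>" "b \<noteq> \<infinity>" using fin Lf by (auto simp: ennreal_add_eq_top)
  then obtain ar br where ar: "a = ennreal ar" "ar \<ge> 0" and br: "b = ennreal br" "br \<ge> 0"
    by (metis ennreal_cases infinity_ennreal_def)
  have apos: "a \<noteq> 0"
  proof
    assume "a = 0"
    then have "AE s in M. ennreal (norm (f s)) * indicator D s = 0"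
      unfolding a_def by (subst nn_integral_0_iff_AE[symmetric]) measurable
    then have "AE s in M. s \<notin> D"
    proof eventually_elim
      case (elim s)
      show ?case
      proof
        assume "s \<in> D"
        then have "f s \<noteq> 0" using DEA by auto
        then show False using elim \<open>s \<in> D\<close> by simp
      qed
    qed
    then have "emeasure M D = 0"
      using AE_iff_measurable[of D M "\<lambda>s. s \<notin> D"] sets.sets_into_space[OF Dm] by auto
    then show False using Dpos by simp
  qed
  then have arpos: "ar > 0" using ar by auto
  have abr: "ar \<le> br" using ab ar br unfolding a_def[symmetric] b_def[symmetric] by simp
  define g where "g s = indicator D s *\<^sub>R f s" for s
  have gsm: "strongly_measurable M g"
  proof -
    obtain u where u: "\<And>i. simple_function M (u i)" "AE s in M. (\<lambda>i. u i s) \<longlonglongrightarrow> f s"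
      using fL unfolding in_L1_def strongly_measurable_def by blast
    have sf: "simple_function M (\<lambda>s. (indicator D s :: real) *\<^sub>R u i s)" for i
      using simple_function_compose2[where h="\<lambda>x y. x *\<^sub>R y", OF simple_function_indicator[OF Dm] u(1)] by simp
    have cv: "AE s in M. (\<lambda>i. (indicator D s :: real) *\<^sub>R u i s) \<longlonglongrightarrow> g s"
      using u(2) by eventually_elim (auto simp: g_def intro: tendsto_scaleR)
    show ?thesis unfolding strongly_measurable_def
      by (rule exI[where x="\<lambda>i s. (indicator D s :: real) *\<^sub>R u i s"]) (use sf cv in auto)
  qed
  have Lg: "L1_norm M g = a"
    unfolding L1_norm_def a_def
    by (rule nn_integral_cong) (auto simp: g_def indicator_def)
  have gL: "in_L1 M g" using gsm Lg \<open>a \<noteq> \<infinity>\<close> unfolding in_L1_def by (simp add: less_top[symmetric])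
  have gf: "bj_orth_L1 M g f"
    unfolding bj_orth_L1_def
  proof
    fix c :: real
    have "L1_norm M (\<lambda>s. g s + c *\<^sub>R f s) =
      (\<integral>\<^sup>+ s. ennreal \<bar>1 + c\<bar> * (ennreal (norm (f s)) * indicator D s) + ennreal \<bar>c\<bar> * (ennreal (norm (f s)) * indicator E s) \<partial>M)"
      unfolding L1_norm_def
    proof (rule nn_integral_cong)
      fix s assume s: "s \<in> space M"
      show "ennreal (norm (g s + c *\<^sub>R f s)) = ennreal \<bar>1 + c\<bar> * (ennreal (norm (f s)) * indicator D s) + ennreal \<bar>c\<bar> * (ennreal (norm (f s)) * indicator E s)"
      proof (cases "s \<in> D")
        case True then have "s \<notin> E" using DE by auto
        then show ?thesis using True by (simp add: g_def norm_1c ennreal_mult)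
      next
        case False
        show ?thesis
        proof (cases "s \<in> E")
          case True then show ?thesis using False by (simp add: g_def ennreal_mult)
        next
          case F2: False
          then have "f s = 0" using False s DEA by auto
          then show ?thesis by (simp add: g_def)
        qed
      qed
    qed
    also have "\<dots> = ennreal \<bar>1 + c\<bar> * a + ennreal \<bar>c\<bar> * b"
      unfolding a_def b_def
      by (subst nn_integral_add) (measurable, simp add: nn_integral_cmult)
    also have "\<dots> = ennreal (\<bar>1 + c\<bar> * ar + \<bar>c\<bar> * br)"
      using ar br by (simp add: ennreal_mult)
    finally have eq: "L1_norm M (\<lambda>s. g s + c *\<^sub>R f s) = ennreal (\<bar>1 + c\<bar> * ar + \<bar>c\<bar> * br)" .
    have "\<bar>c\<bar> * ar \<le> \<bar>c\<bar> * br" using abr by (simp add: mult_left_mono)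
    moreover have "1 \<le> \<bar>1 + c\<bar> + \<bar>c\<bar>" by linarith
    then have "1 * ar \<le> (\<bar>1 + c\<bar> + \<bar>c\<bar>) * ar" using ar(2) by (rule mult_right_mono)
    ultimately have "ar \<le> \<bar>1 + c\<bar> * ar + \<bar>c\<bar> * br" by (simp add: distrib_right)
    then show "L1_norm M g \<le> L1_norm M (\<lambda>s. g s + c *\<^sub>R f s)"
      using eq Lg ar by (simp add: ennreal_leI)
  qed
  have "bj_orth_L1 M f g" using rsf gL gf unfolding right_symmetric_L1_def by blast
  then have le: "L1_norm M f \<le> L1_norm M (\<lambda>s. f s + (-1) *\<^sub>R g s)"
    unfolding bj_orth_L1_def by blast
  have "L1_norm M (\<lambda>s. f s + (-1) *\<^sub>R g s) = b"
    unfolding L1_norm_def b_def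
  proof (rule nn_integral_cong)
    fix s assume s: "s \<in> space M"
    show "ennreal (norm (f s + (-1) *\<^sub>R g s)) = ennreal (norm (f s)) * indicator E s"
    proof (cases "s \<in> D")
      case True then have "s \<notin> E" using DE by auto
      then show ?thesis using True by (simp add: g_def)
    next
      case False
      show ?thesis
      proof (cases "s \<in> E")
        case True then show ?thesis using False by (simp add: g_def)
      next
        case F2: False
        then have "f s = 0" using False s DEA by auto
        then show ?thesis by (simp add: g_def)
      qed
    qed
  qed
  then have "ennreal ar + ennreal br \<le> ennreal br" using le Lf ar br by simp
  then have "ar + br \<le> br" using ar br by (simp del: ennreal_plus add: ennreal_plus[symmetric])
  then show False using arpos by simp
qed


lemma dir1:
  fixes f :: "'s \<Rightarrow> 'b::real_normed_vector"
  assumes cm: "complete_measure M" and fL: "in_L1 M f" and nz: "\<not> (AE s in M. f s = 0)"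
    and rsf: "right_symmetric_L1 M f"
  shows "is_atom M {s \<in> space M. f s \<noteq> 0}"
proof -
  define A where "A = {s \<in> space M. f s \<noteq> 0}"
  have fm[measurable]: "(\<lambda>s. norm (f s)) \<in> borel_measurable M"
    using norm_meas[OF cm] fL unfolding in_L1_def by blast
  have "{s \<in> space M. norm (f s) \<noteq> 0} \<in> sets M" by measurable
  then have Am[measurable]: "A \<in> sets M" unfolding A_def by simp
  have Apos: "emeasure M A > 0"
  proof (rule ccontr)
    assume "\<not> ?thesis"
    then have "A \<in> null_sets M" using Am by (simp add: null_sets_def)
    then have "AE s in M. s \<notin> A" by (rule AE_not_in)
    then have "AE s in M. f s = 0" using AE_space by eventually_elim (auto simp: A_def)
    then show False using nz by simp
  qed
  have "\<forall>B\<in>sets M. B \<subseteq> A \<longrightarrow> emeasure M B = 0 \<or> emeasure M B = emeasure M A"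
  proof (intro ballI impI)
    fix B assume Bm[measurable]: "B \<in> sets M" and BA: "B \<subseteq> A"
    show "emeasure M B = 0 \<or> emeasure M B = emeasure M A"
    proof (rule ccontr)
      assume H: "\<not> ?thesis"
      define C where "C = A - B"
      have Cm[measurable]: "C \<in> sets M" unfolding C_def by measurable
      have BC: "B \<inter> C = {}" "B \<union> C = A" using BA unfolding C_def by auto
      have "emeasure M B + emeasure M C = emeasure M A"
        using plus_emeasure[OF Bm Cm BC(1)] BC(2) by simp
      then have Cpos: "emeasure M C \<noteq> 0" using H by auto
      have Bpos: "emeasure M B \<noteq> 0" using H by auto
      show False
      proof (cases "(\<integral>\<^sup>+ s. ennreal (norm (f s)) * indicator B s \<partial>M) \<le> (\<integral>\<^sup>+ s. ennreal (norm (f s)) * indicator C s \<partial>M)")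
        case True
        show False
          by (rule dir1_split[OF cm fL rsf Bm Cm BC(1) _ Bpos True]) (use BC(2) A_def in simp)
      next
        case False
        then have le: "(\<integral>\<^sup>+ s. ennreal (norm (f s)) * indicator C s \<partial>M) \<le> (\<integral>\<^sup>+ s. ennreal (norm (f s)) * indicator B s \<partial>M)"
          by simp
        have "C \<inter> B = {}" "C \<union> B = A" using BC by auto
        show False
          by (rule dir1_split[OF cm fL rsf Cm Bm \<open>C \<inter> B = {}\<close> _ Cpos le]) (use \<open>C \<union> B = A\<close> A_def in simp)
      qed
    qed
  qed
  then show ?thesis using Am Apos unfolding is_atom_def A_def by blast
qed

theorem theorem3p10:
  fixes M :: "'s measure" and f :: "'s \<Rightarrow> 'b::banach"
  assumes "complete_measure M"
    and "\<forall>x::'b. x \<noteq> 0 \<longrightarrow> norm differentiable (at x)"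
    and "in_L1 M f"
    and "\<not> (AE s in M. f s = 0)"
  shows "(right_symmetric_L1 M f \<longrightarrow> is_atom M {s \<in> space M. f s \<noteq> 0})
    \<and> ((is_atom M {s \<in> space M. f s \<noteq> 0} \<and> (\<forall>s\<in>space M. right_symmetric (f s)))
         \<longrightarrow> right_symmetric_L1 M f)"
  using dir1[OF assms(1,3,4)] dir2[OF assms(1,3)] by blast

end
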